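(* Let $(\mathbf C,I)$ be a finite-type based chain complex of real inner product spaces, let $M$ be an $(n,n-1)$-free Morse matching on it with Morse retraction $\Phi:\mathbf D\to\mathbf C$, $\Psi:\mathbf C\to\mathbf D$ where $\mathbf D=\mathbf C^M$, and let $M'$ be an $(n,n-1)$-free Morse matching on the based complex $\mathbf D$ with Morse retraction $\Phi':\mathbf E\to\mathbf D$, $\Psi':\mathbf D\to\mathbf E$ where $\mathbf E=\mathbf D^{M'}$. Then for all $s\in\mathbf C_n$, $$\mathcal L_s(\Psi'\Psi,\Phi\Phi')\le\mathcal L_s(\Psi,\Phi)+\mathcal L_{\Psi(s)}(\Psi',\Phi'),$$ i.e. $\lVert s-\Phi\Phi'\Psi'\Psi s\rVert_{\mathbf C_n}\le\lVert s-\Phi\Psi s\rVert_{\mathbf C_n}+\lVert\Psi s-\Phi'\Psi'\Psi s\rVert_{\mathbf D_n}$.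
   Context: Based chain complex: chain complex $(\mathbf C,\partial)$ of finite-dimensional real inner product spaces $\mathbf C_n$, $n\ge0$, with disjoint finite index sets $I_n$ and $\mathbf C_n=\bigoplus_{\alpha\in I_n}C_\alpha$; $\partial_{\beta,\alpha}=\pi_\beta\partial_n i_\alpha$. Graph: edges $\alpha\to\beta$ when $\partial_{\beta,\alpha}\ne0$. Morse matching: edge set $M$ with each cell on at most one edge, $\partial_{\beta,\alpha}$ an isomorphism for $\alpha\to\beta\in M$, and "directed path from $\alpha$ to $\beta$ in the graph with $M$ reversed" a partial order on each $I_n$; $M^0$ = unmatched cells; $(n,n-1)$-free means no edge of $M$ joins an $n$-cell to an $(n-1)$-cell. With $\Gamma_{\beta,\alpha}$ the sum over directed paths from $\alpha$ to $\beta$ in the reversed graph of composites of $\partial_{\sigma_{i+1},\sigma_i}$ (ordinary steps) and $-\partial_{\sigma_i,\sigma_{i+1}}^{-1}$ (reversed matched edges): Morse complex $\mathbf C^M_n=\bigoplus_{\alpha\in I_n\cap M^0}C_\alpha$ (based by $I\cap M^0$, restricted inner product) with boundary $\sum_{\beta\in M^0\cap I_{n-1}}\Gamma_{\beta,\alpha}$; Morse retraction $\Phi=\sum_{\beta\in I_n}\Gamma_{\beta,\alpha}$ on critical $C_\alpha$, $\Psi=\sum_{\beta\in M^0\cap I_n}\Gamma_{\beta,\alpha}$ on $C_\alpha$. For chain maps $\Phi,\Psi$ and a signal $s$, the topological loss is $\mathcal L_s(\Psi,\Phi)=\lVert s-\Phi\Psi s\rVert$. *)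

theory Defs
  imports "HOL-Analysis.Inner_Product"
begin

text \<open>
A based chain complex is modelled inside one real inner product space 'v:
a set of cells I, a degree function deg, for every cell a subspace sp c of 'v
(the summand C_c), and a linear boundary map bd on 'v.
The degree-n chain space C_n is the (direct) sum of the sp c with deg c = n.
\<close>

definition chain_space :: "'a set \<Rightarrow> ('a \<Rightarrow> nat) \<Rightarrow> ('a \<Rightarrow> 'v::real_vector set) \<Rightarrow> nat \<Rightarrow> 'v set" where
  "chain_space I deg sp n = span (\<Union>{sp c |c. c \<in> I \<and> deg c = n})"

definition total_space :: "'a set \<Rightarrow> ('a \<Rightarrow> 'v::real_vector set) \<Rightarrow> 'v set" where
  "total_space I sp = span (\<Union>(sp ` I))"

definition proj :: "'a set \<Rightarrow> ('a \<Rightarrow> 'v::real_vector set) \<Rightarrow> 'a \<Rightarrow> 'v \<Rightarrow> 'v" where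
  "proj I sp b x = (THE f. (\<forall>c\<in>I. f c \<in> sp c) \<and> (\<forall>c. c \<notin> I \<longrightarrow> f c = 0)
                          \<and> x = (\<Sum>c\<in>I. f c)) b"

text \<open>Block partial_{b,a} = pi_b o bd o i_a (as a map on 'v, meant on sp a).\<close>
definition blk :: "'a set \<Rightarrow> ('a \<Rightarrow> 'v::real_vector set) \<Rightarrow> ('v \<Rightarrow> 'v) \<Rightarrow> 'a \<Rightarrow> 'a \<Rightarrow> 'v \<Rightarrow> 'v" where
  "blk I sp bd b a = (\<lambda>x. proj I sp b (bd x))"

definition based_chain_complex ::
  "'a set \<Rightarrow> ('a \<Rightarrow> nat) \<Rightarrow> ('a \<Rightarrow> 'v::real_inner set) \<Rightarrow> ('v \<Rightarrow> 'v) \<Rightarrow> bool" where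
  "based_chain_complex I deg sp bd \<longleftrightarrow>
     finite I
   \<and> (\<forall>c\<in>I. subspace (sp c) \<and> (\<exists>B. finite B \<and> sp c = span B))
   \<and> (\<forall>f. (\<forall>c\<in>I. f c \<in> sp c) \<and> (\<Sum>c\<in>I. f c) = 0 \<longrightarrow> (\<forall>c\<in>I. f c = 0))
   \<and> linear bd
   \<and> (\<forall>n. \<forall>x\<in>chain_space I deg sp (Suc n). bd x \<in> chain_space I deg sp n)
   \<and> (\<forall>x\<in>chain_space I deg sp 0. bd x = 0)
   \<and> (\<forall>x\<in>total_space I sp. bd (bd x) = 0)"

definition edge :: "'a set \<Rightarrow> ('a \<Rightarrow> 'v::real_vector set) \<Rightarrow> ('v \<Rightarrow> 'v) \<Rightarrow> 'a \<Rightarrow> 'a \<Rightarrow> bool" where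
  "edge I sp bd a b \<longleftrightarrow> a \<in> I \<and> b \<in> I \<and> (\<exists>x\<in>sp a. blk I sp bd b a x \<noteq> 0)"

definition rstep :: "'a set \<Rightarrow> ('a \<Rightarrow> 'v::real_vector set) \<Rightarrow> ('v \<Rightarrow> 'v) \<Rightarrow> ('a \<times> 'a) set \<Rightarrow> 'a \<Rightarrow> 'a \<Rightarrow> bool" where
  "rstep I sp bd M a b \<longleftrightarrow> (edge I sp bd a b \<and> (a, b) \<notin> M) \<or> (b, a) \<in> M"

definition morse_matching ::
  "'a set \<Rightarrow> ('a \<Rightarrow> nat) \<Rightarrow> ('a \<Rightarrow> 'v::real_vector set) \<Rightarrow> ('v \<Rightarrow> 'v) \<Rightarrow> ('a \<times> 'a) set \<Rightarrow> bool" where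
  "morse_matching I deg sp bd M \<longleftrightarrow>
     (\<forall>(a, b)\<in>M. edge I sp bd a b)
   \<and> (\<forall>e1\<in>M. \<forall>e2\<in>M. {fst e1, snd e1} \<inter> {fst e2, snd e2} \<noteq> {} \<longrightarrow> e1 = e2)
   \<and> (\<forall>(a, b)\<in>M. bij_betw (blk I sp bd b a) (sp a) (sp b))
   \<and> (\<forall>n. partial_order_on {c\<in>I. deg c = n}
            {(a, b). a \<in> I \<and> deg a = n \<and> b \<in> I \<and> deg b = n \<and> (rstep I sp bd M)\<^sup>*\<^sup>* a b})"

definition nfree :: "('a \<Rightarrow> nat) \<Rightarrow> ('a \<times> 'a) set \<Rightarrow> nat \<Rightarrow> bool" where
  "nfree deg M n \<longleftrightarrow> \<not> (\<exists>(a, b)\<in>M. (deg a = n \<and> deg b + 1 = n) \<or> (deg b = n \<and> deg a + 1 = n))"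

definition critical :: "'a set \<Rightarrow> ('a \<times> 'a) set \<Rightarrow> 'a set" where
  "critical I M = {c \<in> I. \<forall>(a, b)\<in>M. c \<noteq> a \<and> c \<noteq> b}"

definition stepmap :: "'a set \<Rightarrow> ('a \<Rightarrow> 'v::real_vector set) \<Rightarrow> ('v \<Rightarrow> 'v) \<Rightarrow> ('a \<times> 'a) set \<Rightarrow> 'a \<Rightarrow> 'a \<Rightarrow> 'v \<Rightarrow> 'v" where
  "stepmap I sp bd M a b =
     (if (b, a) \<in> M then (\<lambda>x. - inv_into (sp b) (blk I sp bd a b) x) else blk I sp bd b a)"

fun pathmap :: "'a set \<Rightarrow> ('a \<Rightarrow> 'v::real_vector set) \<Rightarrow> ('v \<Rightarrow> 'v) \<Rightarrow> ('a \<times> 'a) set \<Rightarrow> 'a list \<Rightarrow> 'v \<Rightarrow> 'v" where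
  "pathmap I sp bd M [] = id"
| "pathmap I sp bd M [a] = id"
| "pathmap I sp bd M (a # b # p) = pathmap I sp bd M (b # p) \<circ> stepmap I sp bd M a b"

definition rpaths :: "'a set \<Rightarrow> ('a \<Rightarrow> 'v::real_vector set) \<Rightarrow> ('v \<Rightarrow> 'v) \<Rightarrow> ('a \<times> 'a) set \<Rightarrow> 'a \<Rightarrow> 'a \<Rightarrow> 'a list set" where
  "rpaths I sp bd M a b = {p. p \<noteq> [] \<and> hd p = a \<and> last p = b \<and> distinct p \<and> set p \<subseteq> I
      \<and> (\<forall>i. Suc i < length p \<longrightarrow> rstep I sp bd M (p ! i) (p ! Suc i))}"

definition Gamma :: "'a set \<Rightarrow> ('a \<Rightarrow> 'v::real_vector set) \<Rightarrow> ('v \<Rightarrow> 'v) \<Rightarrow> ('a \<times> 'a) set \<Rightarrow> 'a \<Rightarrow> 'a \<Rightarrow> 'v \<Rightarrow> 'v" where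
  "Gamma I sp bd M b a x = (\<Sum>p\<in>rpaths I sp bd M a b. pathmap I sp bd M p x)"

text \<open>Boundary of the Morse complex C^M (cells critical I M, same summands).\<close>
definition morse_bd :: "'a set \<Rightarrow> ('a \<Rightarrow> nat) \<Rightarrow> ('a \<Rightarrow> 'v::real_vector set) \<Rightarrow> ('v \<Rightarrow> 'v) \<Rightarrow> ('a \<times> 'a) set \<Rightarrow> 'v \<Rightarrow> 'v" where
  "morse_bd I deg sp bd M x =
     (\<Sum>a\<in>critical I M. \<Sum>b\<in>{b \<in> critical I M. deg b + 1 = deg a}.
        Gamma I sp bd M b a (proj (critical I M) sp a x))"

definition morse_Phi :: "'a set \<Rightarrow> ('a \<Rightarrow> nat) \<Rightarrow> ('a \<Rightarrow> 'v::real_vector set) \<Rightarrow> ('v \<Rightarrow> 'v) \<Rightarrow> ('a \<times> 'a) set \<Rightarrow> 'v \<Rightarrow> 'v" where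
  "morse_Phi I deg sp bd M x =
     (\<Sum>a\<in>critical I M. \<Sum>b\<in>{b \<in> I. deg b = deg a}.
        Gamma I sp bd M b a (proj (critical I M) sp a x))"

definition morse_Psi :: "'a set \<Rightarrow> ('a \<Rightarrow> nat) \<Rightarrow> ('a \<Rightarrow> 'v::real_vector set) \<Rightarrow> ('v \<Rightarrow> 'v) \<Rightarrow> ('a \<times> 'a) set \<Rightarrow> 'v \<Rightarrow> 'v" where
  "morse_Psi I deg sp bd M x =
     (\<Sum>a\<in>I. \<Sum>b\<in>{b \<in> critical I M. deg b = deg a}.
        Gamma I sp bd M b a (proj I sp a x))"

definition topo_loss :: "('v \<Rightarrow> 'w) \<Rightarrow> ('w \<Rightarrow> 'v::real_normed_vector) \<Rightarrow> 'v \<Rightarrow> real" where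
  "topo_loss Psi Phi s = norm (s - Phi (Psi s))"

end

theory Submission imports Defs begin

definition DS :: "'a set \<Rightarrow> ('a \<Rightarrow> 'v::real_vector set) \<Rightarrow> bool" where
  "DS K sp \<longleftrightarrow> finite K \<and> (\<forall>c\<in>K. subspace (sp c))
     \<and> (\<forall>f. (\<forall>c\<in>K. f c \<in> sp c) \<and> (\<Sum>c\<in>K. f c) = 0 \<longrightarrow> (\<forall>c\<in>K. f c = 0))"

lemma DS_sub: assumes "DS K sp" "K' \<subseteq> K" shows "DS K' sp"
  unfolding DS_def
proof (intro conjI allI impI ballI)
  show "finite K'" using assms finite_subset unfolding DS_def by blast
  fix c assume "c \<in> K'" thus "subspace (sp c)" using assms unfolding DS_def by blast
next
  fix f c assume h: "(\<forall>c\<in>K'. f c \<in> sp c) \<and> (\<Sum>c\<in>K'. f c) = 0" and c: "c \<in> K'"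
  define g where "g = (\<lambda>c. if c \<in> K' then f c else 0)"
  have fin: "finite K" using assms unfolding DS_def by blast
  have "(\<Sum>c\<in>K. g c) = (\<Sum>c\<in>K'. f c)"
    unfolding g_def using sum.inter_restrict[OF fin, of f K'] assms(2)
    by (simp add: Int_absorb1 inf.absorb2 sum.If_cases[OF fin])
  moreover have "\<forall>c\<in>K. g c \<in> sp c" using h assms unfolding g_def DS_def
    by (auto intro: subspace_0)
  ultimately have "\<forall>c\<in>K. g c = 0" using h assms(1) unfolding DS_def by auto
  hence "g c = 0" using c assms(2) by blast
  thus "f c = 0" using c unfolding g_def by simp
qed

lemma dec_exists:
  assumes ds: "DS K sp" and J: "J \<subseteq> K" and z: "z \<in> span (\<Union>(sp ` J))"
  shows "\<exists>f. (\<forall>c\<in>K. f c \<in> sp c) \<and> (\<forall>c. c \<notin> J \<longrightarrow> f c = 0) \<and> z = sum f K"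
proof -
  let ?S = "{z. \<exists>f. (\<forall>c\<in>K. f c \<in> sp c) \<and> (\<forall>c. c \<notin> J \<longrightarrow> f c = 0) \<and> z = sum f K}"
  have fin: "finite K" and subs: "\<And>c. c \<in> K \<Longrightarrow> subspace (sp c)" using ds unfolding DS_def by auto
  have "subspace ?S"
    unfolding subspace_def
  proof (intro conjI ballI allI)
    show "0 \<in> ?S" by (rule CollectI, rule exI[of _ "\<lambda>_. 0"]) (auto intro: subspace_0 subs)
  next
    fix x y assume "x \<in> ?S" "y \<in> ?S"
    then obtain f g where f: "(\<forall>c\<in>K. f c \<in> sp c) \<and> (\<forall>c. c \<notin> J \<longrightarrow> f c = 0) \<and> x = sum f K"
      and g: "(\<forall>c\<in>K. g c \<in> sp c) \<and> (\<forall>c. c \<notin> J \<longrightarrow> g c = 0) \<and> y = sum g K" by blast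
    show "x + y \<in> ?S"
      by (rule CollectI, rule exI[of _ "\<lambda>c. f c + g c"]) (use f g in \<open>auto intro: subspace_add subs simp: sum.distrib\<close>)
  next
    fix r :: real and x assume "x \<in> ?S"
    then obtain f where f: "(\<forall>c\<in>K. f c \<in> sp c) \<and> (\<forall>c. c \<notin> J \<longrightarrow> f c = 0) \<and> x = sum f K" by blast
    show "r *\<^sub>R x \<in> ?S"
      by (rule CollectI, rule exI[of _ "\<lambda>c. r *\<^sub>R f c"]) (use f in \<open>auto intro: subspace_scale subs simp: scaleR_sum_right\<close>)
  qed
  moreover have B: "\<Union>(sp ` J) \<subseteq> ?S"
  proof
    fix x assume "x \<in> \<Union>(sp ` J)"
    then obtain c where c: "c \<in> J" "x \<in> sp c" by blast
    show "x \<in> ?S"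
      by (rule CollectI, rule exI[of _ "\<lambda>d. if d = c then x else 0"])
         (use c J fin in \<open>auto intro: subspace_0 subs simp: sum.delta\<close>)
  qed
  ultimately have "span (\<Union>(sp ` J)) \<subseteq> ?S" using span_minimal by blast
  thus ?thesis using z by blast
qed

lemma proj_eq:
  assumes ds: "DS K sp" and f: "\<forall>c\<in>K. f c \<in> sp c" "\<forall>c. c \<notin> K \<longrightarrow> f c = 0" and z: "z = sum f K"
  shows "proj K sp b z = f b"
proof -
  have "(THE g. (\<forall>c\<in>K. g c \<in> sp c) \<and> (\<forall>c. c \<notin> K \<longrightarrow> g c = 0) \<and> z = (\<Sum>c\<in>K. g c)) = f"
  proof (rule the_equality)
    show "(\<forall>c\<in>K. f c \<in> sp c) \<and> (\<forall>c. c \<notin> K \<longrightarrow> f c = 0) \<and> z = (\<Sum>c\<in>K. f c)" using f z by auto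
  next
    fix g assume g: "(\<forall>c\<in>K. g c \<in> sp c) \<and> (\<forall>c. c \<notin> K \<longrightarrow> g c = 0) \<and> z = (\<Sum>c\<in>K. g c)"
    have "\<forall>c\<in>K. (\<lambda>c. g c - f c) c \<in> sp c" using g f ds unfolding DS_def by (auto intro: subspace_diff)
    moreover have "(\<Sum>c\<in>K. g c - f c) = 0" using g z by (simp add: sum_subtractf)
    moreover have uniq: "\<And>h. (\<forall>c\<in>K. h c \<in> sp c) \<Longrightarrow> sum h K = 0 \<Longrightarrow> \<forall>c\<in>K. h c = 0"
      using ds unfolding DS_def by blast
    ultimately have "\<forall>c\<in>K. g c - f c = 0" using uniq[of "\<lambda>c. g c - f c"] by simp
    thus "g = f" using g f by (intro ext) (metis eq_iff_diff_eq_0)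
  qed
  thus ?thesis unfolding proj_def by simp
qed

lemma proj_span:
  assumes ds: "DS K sp" and J: "J \<subseteq> K" and z: "z \<in> span (\<Union>(sp ` J))"
  shows "\<exists>f. (\<forall>c\<in>K. f c \<in> sp c) \<and> (\<forall>c. c \<notin> J \<longrightarrow> f c = 0) \<and> z = sum f K \<and> (\<forall>b. proj K sp b z = f b)"
proof -
  obtain f where f: "(\<forall>c\<in>K. f c \<in> sp c) \<and> (\<forall>c. c \<notin> J \<longrightarrow> f c = 0) \<and> z = sum f K"
    using dec_exists[OF ds J z] by blast
  moreover have "\<forall>b. proj K sp b z = f b" using f J by (intro allI proj_eq[OF ds]) auto
  ultimately show ?thesis by blast
qed

lemma proj_in: assumes "DS K sp" "z \<in> total_space K sp" "b \<in> K" shows "proj K sp b z \<in> sp b"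
  using proj_span[OF assms(1) order_refl, of z] assms unfolding total_space_def by auto

lemma proj_zero_out: assumes "DS K sp" "J \<subseteq> K" "z \<in> span (\<Union>(sp ` J))" "b \<notin> J"
  shows "proj K sp b z = 0"
  using proj_span[OF assms(1-3)] assms(4) by auto

lemma proj_0: assumes "DS K sp" shows "proj K sp b 0 = 0"
  using proj_zero_out[OF assms, of "{}"] by (simp add: span_zero)


definition vpath :: "'a set \<Rightarrow> ('a \<Rightarrow> 'v::real_vector set) \<Rightarrow> ('v \<Rightarrow> 'v) \<Rightarrow> ('a \<times> 'a) set \<Rightarrow> 'a list \<Rightarrow> bool" where
  "vpath K sp bd M p \<longleftrightarrow> p \<noteq> [] \<and> set p \<subseteq> K \<and> (\<forall>i. Suc i < length p \<longrightarrow> rstep K sp bd M (p ! i) (p ! Suc i))"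

lemma step_ok:
  assumes ds: "DS K sp" and mm: "morse_matching K deg sp bdK MK"
    and hbd: "\<forall>c\<in>K. \<forall>v\<in>sp c. bdK v \<in> total_space K sp" and bd0: "bdK 0 = 0"
    and a: "a \<in> K" and c: "c \<in> K" and r: "rstep K sp bdK MK a c"
  shows "(\<forall>v\<in>sp a. stepmap K sp bdK MK a c v \<in> sp c) \<and> stepmap K sp bdK MK a c 0 = 0"
proof (cases "(c, a) \<in> MK")
  case True
  have bij: "bij_betw (blk K sp bdK a c) (sp c) (sp a)" using mm True unfolding morse_matching_def by blast
  have sa: "subspace (sp a)" "subspace (sp c)" using ds a c unfolding DS_def by auto
  have "\<forall>v\<in>sp a. inv_into (sp c) (blk K sp bdK a c) v \<in> sp c"
    using bij by (metis bij_betw_imp_surj_on inv_into_into)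
  moreover have "blk K sp bdK a c 0 = 0" unfolding blk_def using bd0 proj_0[OF ds] by simp
  hence "inv_into (sp c) (blk K sp bdK a c) 0 = 0"
    using bij sa by (metis bij_betw_imp_inj_on inv_into_f_eq subspace_0)
  ultimately show ?thesis using True sa unfolding stepmap_def by (auto intro: subspace_neg)
next
  case False
  then show ?thesis unfolding stepmap_def blk_def using hbd a c bd0 proj_0[OF ds] proj_in[OF ds] by auto
qed

lemma path_ok:
  assumes ds: "DS K sp" and mm: "morse_matching K deg sp bdK MK"
    and hbd: "\<forall>c\<in>K. \<forall>v\<in>sp c. bdK v \<in> total_space K sp" and bd0: "bdK 0 = 0"
  shows "vpath K sp bdK MK p \<Longrightarrow> (\<forall>v\<in>sp (hd p). pathmap K sp bdK MK p v \<in> sp (last p)) \<and> pathmap K sp bdK MK p 0 = 0"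
proof (induction p)
  case Nil
  then show ?case by (simp add: vpath_def)
next
  case (Cons a q)
  show ?case
  proof (cases q)
    case Nil
    then show ?thesis by simp
  next
    case (Cons b p)
    have v: "vpath K sp bdK MK q" and r: "rstep K sp bdK MK a b" and ab: "a \<in> K" "b \<in> K"
    proof -
      show "vpath K sp bdK MK q" using "Cons.prems" Cons unfolding vpath_def
        by auto
      show "rstep K sp bdK MK a b" using "Cons.prems" Cons unfolding vpath_def by fastforce
      show "a \<in> K" "b \<in> K" using "Cons.prems" Cons unfolding vpath_def by auto
    qed
    have IH: "(\<forall>v\<in>sp b. pathmap K sp bdK MK q v \<in> sp (last q)) \<and> pathmap K sp bdK MK q 0 = 0"
      using Cons.IH[OF v] Cons by simp
    have st: "(\<forall>v\<in>sp a. stepmap K sp bdK MK a b v \<in> sp b) \<and> stepmap K sp bdK MK a b 0 = 0"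
      by (rule step_ok[OF ds mm hbd bd0 ab r])
    show ?thesis using IH st Cons by simp
  qed
qed


lemma rpaths_vpath: "p \<in> rpaths K sp bd M a b \<Longrightarrow> vpath K sp bd M p \<and> hd p = a \<and> last p = b"
  unfolding rpaths_def vpath_def by auto

lemma Gamma_ok:
  assumes ds: "DS K sp" and mm: "morse_matching K deg sp bdK MK"
    and hbd: "\<forall>c\<in>K. \<forall>v\<in>sp c. bdK v \<in> total_space K sp" and bd0: "bdK 0 = 0"
    and b: "b \<in> K"
  shows "(\<forall>v\<in>sp a. Gamma K sp bdK MK b a v \<in> sp b) \<and> Gamma K sp bdK MK b a 0 = 0"
proof -
  have sb: "subspace (sp b)" using ds b unfolding DS_def by auto
  have P: "\<And>p. p \<in> rpaths K sp bdK MK a b \<Longrightarrow>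
     (\<forall>v\<in>sp a. pathmap K sp bdK MK p v \<in> sp b) \<and> pathmap K sp bdK MK p 0 = 0"
  proof -
    fix p assume p: "p \<in> rpaths K sp bdK MK a b"
    note R = rpaths_vpath[OF p]
    have "(\<forall>v\<in>sp (hd p). pathmap K sp bdK MK p v \<in> sp (last p)) \<and> pathmap K sp bdK MK p 0 = 0"
      by (rule path_ok[OF ds mm hbd bd0 conjunct1[OF R]])
    thus "(\<forall>v\<in>sp a. pathmap K sp bdK MK p v \<in> sp b) \<and> pathmap K sp bdK MK p 0 = 0"
      using R by simp
  qed
  have 1: "\<forall>v\<in>sp a. Gamma K sp bdK MK b a v \<in> sp b"
  proof
    fix v assume "v \<in> sp a"
    thus "Gamma K sp bdK MK b a v \<in> sp b" unfolding Gamma_def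
      by (intro subspace_sum[OF sb]) (use P in blast)
  qed
  have 2: "Gamma K sp bdK MK b a 0 = 0" unfolding Gamma_def
    by (rule sum.neutral) (use P in blast)
  show ?thesis using 1 2 by blast
qed

lemma crit_sub: "critical K M \<subseteq> K" unfolding critical_def by auto

lemma in_span: "b \<in> J \<Longrightarrow> v \<in> sp b \<Longrightarrow> v \<in> span (\<Union>(sp ` J))"
  by (rule subsetD[OF span_superset]) blast

lemma span_tot: "J \<subseteq> K \<Longrightarrow> x \<in> span (\<Union>(sp ` J)) \<Longrightarrow> x \<in> total_space K sp"
proof -
  assume "J \<subseteq> K" "x \<in> span (\<Union>(sp ` J))"
  moreover have "\<Union>(sp ` J) \<subseteq> \<Union>(sp ` K)" using \<open>J \<subseteq> K\<close> by blast
  ultimately show ?thesis unfolding total_space_def using span_mono by blast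
qed

lemma Psi_deg:
  assumes ds: "DS K sp" and mm: "morse_matching K deg sp bdK MK"
    and hbd: "\<forall>c\<in>K. \<forall>v\<in>sp c. bdK v \<in> total_space K sp" and bd0: "bdK 0 = 0"
    and x: "x \<in> span (\<Union>(sp ` {c\<in>K. deg c = n}))"
  shows "morse_Psi K deg sp bdK MK x \<in> span (\<Union>(sp ` {c\<in>critical K MK. deg c = n}))"
  unfolding morse_Psi_def
proof (intro span_sum)
  fix a b assume a: "a \<in> K" and b: "b \<in> {b \<in> critical K MK. deg b = deg a}"
  have bK: "b \<in> K" using b crit_sub[of K MK] by (simp add: subset_iff)
  note G = Gamma_ok[OF ds mm hbd bd0 bK, of a]
  show "Gamma K sp bdK MK b a (proj K sp a x) \<in> span (\<Union>(sp ` {c\<in>critical K MK. deg c = n}))"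
  proof (cases "deg a = n")
    case True
    have "x \<in> total_space K sp" by (rule span_tot[OF _ x]) blast
    hence "proj K sp a x \<in> sp a" using proj_in[OF ds _ a] by blast
    hence "Gamma K sp bdK MK b a (proj K sp a x) \<in> sp b" using G by blast
    moreover have "b \<in> {c\<in>critical K MK. deg c = n}" using b True by simp
    ultimately show ?thesis by (rule in_span[rotated])
  next
    case False
    hence "a \<notin> {c\<in>K. deg c = n}" by simp
    hence "proj K sp a x = 0" by (rule proj_zero_out[OF ds _ x, rotated]) blast
    thus ?thesis using G by (simp add: span_zero)
  qed
qed

lemma Phi_deg:
  assumes ds: "DS K sp" and mm: "morse_matching K deg sp bdK MK"
    and hbd: "\<forall>c\<in>K. \<forall>v\<in>sp c. bdK v \<in> total_space K sp" and bd0: "bdK 0 = 0"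
    and x: "x \<in> span (\<Union>(sp ` {c\<in>critical K MK. deg c = n}))"
  shows "morse_Phi K deg sp bdK MK x \<in> span (\<Union>(sp ` {c\<in>K. deg c = n}))"
  unfolding morse_Phi_def
proof (intro span_sum)
  have ds': "DS (critical K MK) sp" using DS_sub[OF ds crit_sub] .
  fix a b assume a: "a \<in> critical K MK" and b: "b \<in> {b \<in> K. deg b = deg a}"
  have bK: "b \<in> K" using b by blast
  note G = Gamma_ok[OF ds mm hbd bd0 bK, of a]
  show "Gamma K sp bdK MK b a (proj (critical K MK) sp a x) \<in> span (\<Union>(sp ` {c\<in>K. deg c = n}))"
  proof (cases "deg a = n")
    case True
    have "x \<in> total_space (critical K MK) sp" by (rule span_tot[OF _ x]) blast
    hence "proj (critical K MK) sp a x \<in> sp a" using proj_in[OF ds' _ a] by blast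
    hence "Gamma K sp bdK MK b a (proj (critical K MK) sp a x) \<in> sp b" using G by blast
    moreover have "b \<in> {c\<in>K. deg c = n}" using b True by simp
    ultimately show ?thesis by (rule in_span[rotated])
  next
    case False
    hence "a \<notin> {c\<in>critical K MK. deg c = n}" by simp
    hence "proj (critical K MK) sp a x = 0" by (rule proj_zero_out[OF ds' _ x, rotated]) blast
    thus ?thesis using G by (simp add: span_zero)
  qed
qed


lemma cs_eq: "chain_space I deg sp n = span (\<Union>(sp ` {c\<in>I. deg c = n}))"
  unfolding chain_space_def by (rule arg_cong[where f=span]) blast

lemma bcc_level:
  assumes C: "based_chain_complex I deg sp bd"
  shows "DS I sp" "\<forall>c\<in>I. \<forall>v\<in>sp c. bd v \<in> total_space I sp" "bd 0 = 0"
proof -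
  show ds: "DS I sp" using C unfolding based_chain_complex_def DS_def by blast
  have lin: "linear bd" using C unfolding based_chain_complex_def by blast
  show "bd 0 = 0" using linear_0[OF lin] .
  show "\<forall>c\<in>I. \<forall>v\<in>sp c. bd v \<in> total_space I sp"
  proof (intro ballI)
    fix c v assume c: "c \<in> I" and v: "v \<in> sp c"
    have vc: "v \<in> chain_space I deg sp (deg c)" unfolding cs_eq
      by (rule in_span[where b=c]) (use c v in simp_all)
    have sub: "\<And>m. chain_space I deg sp m \<subseteq> total_space I sp"
      unfolding cs_eq total_space_def by (rule span_mono) blast
    show "bd v \<in> total_space I sp"
    proof (cases "deg c")
      case 0
      then have "bd v = 0" using C vc unfolding based_chain_complex_def by auto
      then show ?thesis by (simp add: total_space_def span_zero)
    next
      case (Suc m)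
      then have "bd v \<in> chain_space I deg sp m" using C vc unfolding based_chain_complex_def by auto
      then show ?thesis using sub by blast
    qed
  qed
qed

lemma edge_deg:
  assumes C: "based_chain_complex I deg sp bd" and e: "edge I sp bd a c"
  shows "deg c + 1 = deg a"
proof -
  have ds: "DS I sp" using bcc_level[OF C] by blast
  obtain x where x: "x \<in> sp a" and nz: "proj I sp c (bd x) \<noteq> 0" and a: "a \<in> I" and c: "c \<in> I"
    using e unfolding edge_def blk_def by blast
  have xc: "x \<in> chain_space I deg sp (deg a)" unfolding cs_eq
    by (rule in_span[where b=a]) (use a x in simp_all)
  show ?thesis
  proof (cases "deg a")
    case 0
    then have "bd x = 0" using C xc unfolding based_chain_complex_def by auto
    then show ?thesis using nz proj_0[OF ds] by simp
  next
    case (Suc m)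
    then have "bd x \<in> span (\<Union>(sp ` {c\<in>I. deg c = m}))" using C xc unfolding based_chain_complex_def cs_eq by auto
    then have "deg c \<noteq> m \<Longrightarrow> proj I sp c (bd x) = 0" using proj_zero_out[OF ds, of "{c\<in>I. deg c = m}"] by auto
    then show ?thesis using nz Suc by auto
  qed
qed

lemma path_deg:
  assumes C: "based_chain_complex I deg sp bd" and mm: "morse_matching I deg sp bd M"
    and nf: "nfree deg M n" and a: "a \<in> critical I M" and da: "deg a = n"
    and p: "vpath I sp bd M p" and hp: "hd p = a"
  shows "Suc i < length p \<Longrightarrow> deg (p ! Suc i) < n"
proof (induction i)
  case 0
  have p0: "p ! 0 = a" using hp p unfolding vpath_def by (simp add: hd_conv_nth)
  have r: "rstep I sp bd M a (p ! Suc 0)" using p 0 p0 unfolding vpath_def by force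
  have "(p ! Suc 0, a) \<notin> M" using a unfolding critical_def by auto
  then have "edge I sp bd a (p ! Suc 0)" using r unfolding rstep_def by auto
  then show ?case using edge_deg[OF C] da by fastforce
next
  case (Suc j)
  have ih: "deg (p ! Suc j) < n" using Suc by simp
  have r: "rstep I sp bd M (p ! Suc j) (p ! Suc (Suc j))" using p Suc.prems unfolding vpath_def by blast
  show ?case
  proof (cases "(p ! Suc (Suc j), p ! Suc j) \<in> M")
    case True
    have "edge I sp bd (p ! Suc (Suc j)) (p ! Suc j)" using mm True unfolding morse_matching_def by blast
    hence d: "deg (p ! Suc j) + 1 = deg (p ! Suc (Suc j))" using edge_deg[OF C] by blast
    have "\<not> (deg (p ! Suc (Suc j)) = n \<and> deg (p ! Suc j) + 1 = n)" using nf True unfolding nfree_def by blast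
    then show ?thesis using d ih by linarith
  next
    case False
    then have "edge I sp bd (p ! Suc j) (p ! Suc (Suc j))" using r unfolding rstep_def by auto
    then show ?thesis using edge_deg[OF C] ih by fastforce
  qed
qed

lemma rpaths_crit:
  assumes C: "based_chain_complex I deg sp bd" and mm: "morse_matching I deg sp bd M"
    and nf: "nfree deg M n" and a: "a \<in> critical I M" and da: "deg a = n"
    and b: "b \<in> I" and db: "deg b = n"
  shows "rpaths I sp bd M a b = (if b = a then {[a]} else {})"
proof -
  have H: "p = [a] \<and> b = a" if p: "p \<in> rpaths I sp bd M a b" for p
  proof -
    have vp: "vpath I sp bd M p" "hd p = a" "last p = b" using rpaths_vpath[OF p] by auto
    have ne: "p \<noteq> []" using vp unfolding vpath_def by auto
    have "\<not> Suc 0 < length p"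
    proof
      assume l: "Suc 0 < length p"
      have l2: "Suc (length p - 2) < length p" using l by linarith
      have "deg (p ! Suc (length p - 2)) < n"
        by (rule path_deg[OF C mm nf a da vp(1,2) l2])
      moreover have "p ! Suc (length p - 2) = last p" proof -
        have "Suc (length p - 2) = length p - 1" using l by linarith
        thus ?thesis using ne by (simp add: last_conv_nth)
      qed
      ultimately show False using vp db by simp
    qed
    then have "length p = 1" using ne by (cases p) auto
    then have "p = [hd p]" by (cases p) auto
    then show ?thesis using vp by (metis last_ConsL)
  qed
  have aI: "a \<in> I" using a crit_sub[of I M] by blast
  have mem: "[a] \<in> rpaths I sp bd M a a" using aI unfolding rpaths_def by simp
  show ?thesis
  proof (cases "b = a")
    case True
    have "rpaths I sp bd M a b = {[a]}"
    proof (rule set_eqI)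
      fix p show "p \<in> rpaths I sp bd M a b \<longleftrightarrow> p \<in> {[a]}"
        using H[of p] mem True by auto
    qed
    then show ?thesis using True by simp
  next
    case False
    have "rpaths I sp bd M a b = {}"
    proof (rule set_eqI)
      fix p show "p \<in> rpaths I sp bd M a b \<longleftrightarrow> p \<in> {}"
        using H[of p] False by auto
    qed
    then show ?thesis using False by simp
  qed
qed


lemma Phi_id:
  assumes C: "based_chain_complex I deg sp bd" and mm: "morse_matching I deg sp bd M"
    and nf: "nfree deg M n" and w: "w \<in> span (\<Union>(sp ` {c\<in>critical I M. deg c = n}))"
  shows "morse_Phi I deg sp bd M w = w"
proof -
  note L = bcc_level[OF C]
  have ds': "DS (critical I M) sp" using DS_sub[OF L(1) crit_sub] .
  have finI: "finite I" using L(1) unfolding DS_def by blast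
  obtain f where f: "\<forall>c\<in>critical I M. f c \<in> sp c" "\<forall>c. c \<notin> {c\<in>critical I M. deg c = n} \<longrightarrow> f c = 0"
     "w = sum f (critical I M)" "\<forall>b. proj (critical I M) sp b w = f b"
    using proj_span[OF ds' _ w] by blast
  have "(\<Sum>b\<in>{b \<in> I. deg b = deg a}. Gamma I sp bd M b a (proj (critical I M) sp a w)) = f a"
    if a: "a \<in> critical I M" for a
  proof (cases "deg a = n")
    case True
    have aI: "a \<in> I" using a crit_sub[of I M] by blast
    have G1: "\<forall>b\<in>{b\<in>I. deg b = deg a}. Gamma I sp bd M b a (f a) = (if b = a then f a else 0)"
    proof
      fix b assume b: "b \<in> {b\<in>I. deg b = deg a}"
      have "rpaths I sp bd M a b = (if b = a then {[a]} else {})"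
        by (rule rpaths_crit[OF C mm nf a True]) (use b True in simp_all)
      then show "Gamma I sp bd M b a (f a) = (if b = a then f a else 0)"
        unfolding Gamma_def by simp
    qed
    have "(\<Sum>b\<in>{b \<in> I. deg b = deg a}. Gamma I sp bd M b a (f a))
       = (\<Sum>b\<in>{b \<in> I. deg b = deg a}. (if b = a then f a else 0))" by (rule sum.cong[OF refl]) (rule bspec[OF G1])
    also have "\<dots> = f a" using finI aI by (simp add: sum.delta)
    finally show ?thesis using f(4) by simp
  next
    case False
    then have "f a = 0" using f(2) by auto
    have "\<forall>b\<in>{b \<in> I. deg b = deg a}. Gamma I sp bd M b a (proj (critical I M) sp a w) = 0"
    proof
      fix b assume "b \<in> {b \<in> I. deg b = deg a}"
      hence "b \<in> I" by simp
      from Gamma_ok[OF L(1) mm L(2) L(3) this, of a] show "Gamma I sp bd M b a (proj (critical I M) sp a w) = 0"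
        using f(4) \<open>f a = 0\<close> by simp
    qed
    hence "(\<Sum>b\<in>{b \<in> I. deg b = deg a}. Gamma I sp bd M b a (proj (critical I M) sp a w)) = 0"
      by (rule sum.neutral)
    then show ?thesis using \<open>f a = 0\<close> by simp
  qed
  then have "morse_Phi I deg sp bd M w = sum f (critical I M)"
    unfolding morse_Phi_def by (rule sum.cong[OF refl])
  then show ?thesis using f(3) by simp
qed

theorem mainTheorem16:
  fixes I :: "'a set" and deg :: "'a \<Rightarrow> nat" and sp :: "'a \<Rightarrow> 'v::real_inner set"
    and bd :: "'v \<Rightarrow> 'v" and M M' :: "('a \<times> 'a) set" and n :: nat and s :: 'v
  assumes C: "based_chain_complex I deg sp bd"
    and M: "morse_matching I deg sp bd M" and Mfree: "nfree deg M n"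
    and M': "morse_matching (critical I M) deg sp (morse_bd I deg sp bd M) M'"
    and M'free: "nfree deg M' n"
    and s: "s \<in> chain_space I deg sp n"
  shows "topo_loss
           (morse_Psi (critical I M) deg sp (morse_bd I deg sp bd M) M' \<circ> morse_Psi I deg sp bd M)
           (morse_Phi I deg sp bd M \<circ> morse_Phi (critical I M) deg sp (morse_bd I deg sp bd M) M') s
         \<le> topo_loss (morse_Psi I deg sp bd M) (morse_Phi I deg sp bd M) s
           + topo_loss (morse_Psi (critical I M) deg sp (morse_bd I deg sp bd M) M')
                       (morse_Phi (critical I M) deg sp (morse_bd I deg sp bd M) M')
                       (morse_Psi I deg sp bd M s)"
proof -
  note L = bcc_level[OF C]
  let ?I' = "critical I M" and ?bd' = "morse_bd I deg sp bd M"
  have ds': "DS ?I' sp" using DS_sub[OF L(1) crit_sub] .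
  have hbd': "\<forall>c\<in>?I'. \<forall>v\<in>sp c. ?bd' v \<in> total_space ?I' sp"
  proof (intro ballI)
    fix c v assume c: "c \<in> ?I'" and v: "v \<in> sp c"
    have vt: "v \<in> total_space ?I' sp" unfolding total_space_def using c v by (rule in_span)
    show "?bd' v \<in> total_space ?I' sp"
      unfolding morse_bd_def total_space_def
    proof (intro span_sum)
      fix a b assume a: "a \<in> ?I'" and b: "b \<in> {b \<in> ?I'. deg b + 1 = deg a}"
      have bI: "b \<in> I" using b crit_sub[of I M] by blast
      have "proj ?I' sp a v \<in> sp a" using proj_in[OF ds' vt a] .
      then have "Gamma I sp bd M b a (proj ?I' sp a v) \<in> sp b" using Gamma_ok[OF L(1) M L(2) L(3) bI] by blast
      moreover have "b \<in> ?I'" using b by simp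
      ultimately show "Gamma I sp bd M b a (proj ?I' sp a v) \<in> span (\<Union>(sp ` ?I'))"
        by (rule in_span[rotated])
    qed
  qed
  have bd0': "?bd' 0 = 0"
    unfolding morse_bd_def
  proof (intro sum.neutral ballI)
    fix a b assume "a \<in> ?I'" "b \<in> {b \<in> ?I'. deg b + 1 = deg a}"
    hence bI: "b \<in> I" using crit_sub[of I M] by auto
    show "Gamma I sp bd M b a (proj ?I' sp a 0) = 0"
      using proj_0[OF ds', of a] Gamma_ok[OF L(1) M L(2) L(3) bI, of a] by simp
  qed
  define t where "t = morse_Psi I deg sp bd M s"
  define u where "u = morse_Phi ?I' deg sp ?bd' M' (morse_Psi ?I' deg sp ?bd' M' t)"
  have t: "t \<in> span (\<Union>(sp ` {c\<in>?I'. deg c = n}))"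
    unfolding t_def by (rule Psi_deg[OF L(1) M L(2) L(3)]) (use s in \<open>simp add: cs_eq\<close>)
  have t2: "morse_Psi ?I' deg sp ?bd' M' t \<in> span (\<Union>(sp ` {c\<in>critical ?I' M'. deg c = n}))"
    by (rule Psi_deg[OF ds' M' hbd' bd0' t])
  have u: "u \<in> span (\<Union>(sp ` {c\<in>?I'. deg c = n}))"
    unfolding u_def by (rule Phi_deg[OF ds' M' hbd' bd0' t2])
  have Pt: "morse_Phi I deg sp bd M t = t" by (rule Phi_id[OF C M Mfree t])
  have Pu: "morse_Phi I deg sp bd M u = u" by (rule Phi_id[OF C M Mfree u])
  have "norm (s - u) \<le> norm (s - t) + norm (t - u)"
    using norm_triangle_ineq[of "s - t" "t - u"] by simp
  moreover have "morse_Phi I deg sp bd M (morse_Psi I deg sp bd M s) = t" using Pt unfolding t_def .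
  moreover have "morse_Phi I deg sp bd M (morse_Phi ?I' deg sp ?bd' M' (morse_Psi ?I' deg sp ?bd' M' (morse_Psi I deg sp bd M s))) = u"
    using Pu unfolding u_def t_def .
  moreover have "morse_Phi ?I' deg sp ?bd' M' (morse_Psi ?I' deg sp ?bd' M' (morse_Psi I deg sp bd M s)) = u"
    unfolding u_def t_def ..
  ultimately show ?thesis
    unfolding topo_loss_def o_def t_def[symmetric] by simp
qed

end
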